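(* An integral domain $D$ is unit-additive if and only if for all $d,e,f\in D\setminus\{0\}$ with $d=\frac1e+\frac1f$ (in the fraction field of $D$), $d$ is a unit of $D$. In particular, every E-simple domain is unit-additive.
   Context: A commutative ring is unit-additive if the sum of any two units is either a unit or nilpotent (for a domain: a unit or zero). For an integral domain $D$ with fraction field $F$, the reciprocal complement $R(D)$ is the subring of $F$ generated by all $1/d$, $d\in D\setminus\{0\}$. An element $d\in D$ is Egyptian if $d\in R(D)$. $D$ is E-simple if every Egyptian element of $D$ is a unit of $D$. *)

theory Defs
  imports "HOL-Computational_Algebra.Fraction_Field"
begin

definition emb :: "'a::idom \<Rightarrow> 'a fract" where
  "emb d = Fract d 1"

definition unit_additive :: "'a::idom itself \<Rightarrow> bool" where
  "unit_additive _ \<longleftrightarrow>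
     (\<forall>u v :: 'a. u dvd 1 \<and> v dvd 1 \<longrightarrow> (u + v) dvd 1 \<or> (\<exists>n. (u + v) ^ n = 0))"

inductive_set recip_complement :: "'a::idom fract set" where
  gen: "d \<noteq> 0 \<Longrightarrow> inverse (emb d) \<in> recip_complement"
| zero: "0 \<in> recip_complement"
| one: "1 \<in> recip_complement"
| add: "x \<in> recip_complement \<Longrightarrow> y \<in> recip_complement \<Longrightarrow> x + y \<in> recip_complement"
| neg: "x \<in> recip_complement \<Longrightarrow> - x \<in> recip_complement"
| mult: "x \<in> recip_complement \<Longrightarrow> y \<in> recip_complement \<Longrightarrow> x * y \<in> recip_complement"

definition egyptian :: "'a::idom \<Rightarrow> bool" where
  "egyptian d \<longleftrightarrow> emb d \<in> recip_complement"

definition E_simple :: "'a::idom itself \<Rightarrow> bool" where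
  "E_simple _ \<longleftrightarrow> (\<forall>d :: 'a. egyptian d \<longrightarrow> d dvd 1)"

end

theory Submission
  imports Defs
begin

lemma key:
  fixes d e f :: "'a::idom"
  assumes "e \<noteq> 0" "f \<noteq> 0"
  shows "emb d = inverse (emb e) + inverse (emb f) \<longleftrightarrow> d * (e * f) = f + e"
proof -
  have "inverse (emb e) + inverse (emb f) = Fract (f + e) (e * f)"
    using assms by (simp add: emb_def inverse_fract add_fract)
  then show ?thesis using assms by (simp add: emb_def eq_fract)
qed

lemma dir1:
  fixes d e f :: "'a::idom"
  assumes ua: "unit_additive TYPE('a)" and nz: "d \<noteq> 0" "e \<noteq> 0" "f \<noteq> 0"
    and eq: "d * (e * f) = f + e"
  shows "d dvd 1"
proof -
  define a where "a = d * f - 1"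
  define b where "b = d * e - 1"
  have fa: "f = e * a" using eq unfolding a_def by (simp add: algebra_simps)
  have eb: "e = f * b" using eq unfolding b_def by (simp add: algebra_simps)
  have "e * 1 = e * (a * b)" using fa eb by (simp add: algebra_simps)
  then have ab: "a * b = 1" using nz by simp
  then have au: "a dvd 1" by (metis dvd_triv_left)
  have a0: "a \<noteq> 0" using ab by auto
  have s: "1 + a = d * e * a"
  proof -
    have "e * (d * e * a) = e * (1 + a)" using eq fa by (simp add: algebra_simps)
    then show ?thesis using nz by simp
  qed
  have "(1 + a) dvd 1 \<or> (\<exists>n. (1 + a) ^ n = 0)"
    using ua au unfolding unit_additive_def by (metis one_dvd dvd_refl)
  moreover have "\<not> (\<exists>n. (1 + a) ^ n = 0)"
    using s nz a0 by simp
  ultimately have "(1 + a) dvd 1" by blast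
  then have "(d * e * a) dvd 1" using s by simp
  then show ?thesis by (metis dvd_mult_left)
qed

lemma dir2:
  fixes u v :: "'a::idom"
  assumes H: "\<forall>d e f :: 'a. d \<noteq> 0 \<and> e \<noteq> 0 \<and> f \<noteq> 0 \<and>
              emb d = inverse (emb e) + inverse (emb f) \<longrightarrow> d dvd 1"
    and u: "u dvd 1" and v: "v dvd 1"
  shows "(u + v) dvd 1 \<or> (\<exists>n. (u + v) ^ n = 0)"
proof (cases "u + v = 0")
  case True then show ?thesis by (metis power_one_right)
next
  case False
  obtain e where e: "u * e = 1" using u by (metis dvd_def)
  obtain f where f: "v * f = 1" using v by (metis dvd_def)
  have e0: "e \<noteq> 0" and f0: "f \<noteq> 0" using e f by auto
  have "(u + v) * (e * f) = f + e"
    using e f by (metis (no_types, lifting) distrib_right mult.assoc mult.commute mult.left_neutral)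
  then have "emb (u + v) = inverse (emb e) + inverse (emb f)" using key e0 f0 by blast
  then show ?thesis using H False e0 f0 by blast
qed

theorem mainTheorem2:
  shows "(unit_additive TYPE('a::idom) \<longleftrightarrow>
           (\<forall>d e f :: 'a. d \<noteq> 0 \<and> e \<noteq> 0 \<and> f \<noteq> 0 \<and>
              emb d = inverse (emb e) + inverse (emb f) \<longrightarrow> d dvd 1))
         \<and> (E_simple TYPE('a::idom) \<longrightarrow> unit_additive TYPE('a))"
proof -
  have A: "unit_additive TYPE('a::idom) \<longleftrightarrow>
           (\<forall>d e f :: 'a. d \<noteq> 0 \<and> e \<noteq> 0 \<and> f \<noteq> 0 \<and>
              emb d = inverse (emb e) + inverse (emb f) \<longrightarrow> d dvd 1)"
  proof
    assume ua: "unit_additive TYPE('a)"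
    show "\<forall>d e f :: 'a. d \<noteq> 0 \<and> e \<noteq> 0 \<and> f \<noteq> 0 \<and>
              emb d = inverse (emb e) + inverse (emb f) \<longrightarrow> d dvd 1"
      using dir1[OF ua] key by blast
  next
    assume H: "\<forall>d e f :: 'a. d \<noteq> 0 \<and> e \<noteq> 0 \<and> f \<noteq> 0 \<and>
              emb d = inverse (emb e) + inverse (emb f) \<longrightarrow> d dvd 1"
    show "unit_additive TYPE('a)"
      unfolding unit_additive_def using dir2[OF H] by blast
  qed
  have B: "E_simple TYPE('a::idom) \<longrightarrow>
           (\<forall>d e f :: 'a. d \<noteq> 0 \<and> e \<noteq> 0 \<and> f \<noteq> 0 \<and>
              emb d = inverse (emb e) + inverse (emb f) \<longrightarrow> d dvd 1)"
  proof (intro impI allI)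
    fix d e f :: 'a
    assume es: "E_simple TYPE('a)"
      and h: "d \<noteq> 0 \<and> e \<noteq> 0 \<and> f \<noteq> 0 \<and> emb d = inverse (emb e) + inverse (emb f)"
    have "emb d \<in> recip_complement"
      using h by (metis recip_complement.add recip_complement.gen)
    then show "d dvd 1" using es unfolding E_simple_def egyptian_def by blast
  qed
  show ?thesis using A B by blast
qed

end
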